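(* Let $G$ be a directed $st$-graph, let $T\neq\{s\}$ be a minimal vertex separator of $G$ and let $b\in T$. Then $T$ is $b$-minimal if and only if $(T\cup\mathrm{pred}(u))\setminus\{b\}\preceq b$ for every $u\in T$.
   Context: A directed $st$-graph $G=(V,E,s,t)$ is a finite directed graph with no self-loops and no parallel edges, with distinct source $s$ (no incoming edges) and sink $t$ (no outgoing edges), such that every vertex lies on some directed walk from $s$ to $t$. A vertex separator is a set $T\subseteq V$ meeting every $s$–$t$ walk; an mvs is an inclusion-minimal one. $\mathrm{pred}(u)=\{v\in V: (v,u)\in E\}$. For $A\subseteq V$, $u\in V$: $A\preceq u$ if every directed walk from $s$ to $u$ contains a vertex of $A$; $u\sqsubseteq A$ if every directed walk from $u$ to $t$ contains a vertex of $A$; $A\sqsubseteq A'$ if $u\sqsubseteq A'$ for all $u\in A$; $A\sqsubset A'$ means $A\sqsubseteq A'$, $A\ne A'$. An mvs $T$ is $b$-minimal if $b\in T$ and $b\notin T'$ for every mvs $T'\sqsubset T$. *)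

theory Defs
  imports Main
begin

definition walk :: "'a set \<Rightarrow> ('a \<times> 'a) set \<Rightarrow> 'a list \<Rightarrow> bool" where
  "walk V E ws \<longleftrightarrow> ws \<noteq> [] \<and> set ws \<subseteq> V \<and>
     (\<forall>i. Suc i < length ws \<longrightarrow> (ws ! i, ws ! Suc i) \<in> E)"

definition walk_from_to :: "'a set \<Rightarrow> ('a \<times> 'a) set \<Rightarrow> 'a \<Rightarrow> 'a \<Rightarrow> 'a list \<Rightarrow> bool" where
  "walk_from_to V E u v ws \<longleftrightarrow> walk V E ws \<and> hd ws = u \<and> last ws = v"

definition st_graph :: "'a set \<Rightarrow> ('a \<times> 'a) set \<Rightarrow> 'a \<Rightarrow> 'a \<Rightarrow> bool" where
  "st_graph V E s t \<longleftrightarrow> finite V \<and> E \<subseteq> V \<times> V \<and> (\<forall>v. (v, v) \<notin> E) \<and>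
     s \<in> V \<and> t \<in> V \<and> s \<noteq> t \<and>
     (\<forall>v. (v, s) \<notin> E) \<and> (\<forall>v. (t, v) \<notin> E) \<and>
     (\<forall>v\<in>V. \<exists>ws. walk_from_to V E s t ws \<and> v \<in> set ws)"

definition vertex_separator :: "'a set \<Rightarrow> ('a \<times> 'a) set \<Rightarrow> 'a \<Rightarrow> 'a \<Rightarrow> 'a set \<Rightarrow> bool" where
  "vertex_separator V E s t T \<longleftrightarrow> T \<subseteq> V \<and>
     (\<forall>ws. walk_from_to V E s t ws \<longrightarrow> set ws \<inter> T \<noteq> {})"

definition mvs :: "'a set \<Rightarrow> ('a \<times> 'a) set \<Rightarrow> 'a \<Rightarrow> 'a \<Rightarrow> 'a set \<Rightarrow> bool" where
  "mvs V E s t T \<longleftrightarrow> vertex_separator V E s t T \<and>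
     (\<forall>T'. T' \<subset> T \<longrightarrow> \<not> vertex_separator V E s t T')"

definition pred :: "'a set \<Rightarrow> ('a \<times> 'a) set \<Rightarrow> 'a \<Rightarrow> 'a set" where
  "pred V E u = {v \<in> V. (v, u) \<in> E}"

definition precedes :: "'a set \<Rightarrow> ('a \<times> 'a) set \<Rightarrow> 'a \<Rightarrow> 'a set \<Rightarrow> 'a \<Rightarrow> bool" where
  "precedes V E s A u \<longleftrightarrow> (\<forall>ws. walk_from_to V E s u ws \<longrightarrow> set ws \<inter> A \<noteq> {})"

definition below_v :: "'a set \<Rightarrow> ('a \<times> 'a) set \<Rightarrow> 'a \<Rightarrow> 'a \<Rightarrow> 'a set \<Rightarrow> bool" where
  "below_v V E t u A \<longleftrightarrow> (\<forall>ws. walk_from_to V E u t ws \<longrightarrow> set ws \<inter> A \<noteq> {})"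

definition below :: "'a set \<Rightarrow> ('a \<times> 'a) set \<Rightarrow> 'a \<Rightarrow> 'a set \<Rightarrow> 'a set \<Rightarrow> bool" where
  "below V E t A A' \<longleftrightarrow> (\<forall>u\<in>A. below_v V E t u A')"

definition strictly_below :: "'a set \<Rightarrow> ('a \<times> 'a) set \<Rightarrow> 'a \<Rightarrow> 'a set \<Rightarrow> 'a set \<Rightarrow> bool" where
  "strictly_below V E t A A' \<longleftrightarrow> below V E t A A' \<and> A \<noteq> A'"

definition b_minimal :: "'a set \<Rightarrow> ('a \<times> 'a) set \<Rightarrow> 'a \<Rightarrow> 'a \<Rightarrow> 'a \<Rightarrow> 'a set \<Rightarrow> bool" where
  "b_minimal V E s t b T \<longleftrightarrow> mvs V E s t T \<and> b \<in> T \<and>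
     (\<forall>T'. mvs V E s t T' \<and> strictly_below V E t T' T \<longrightarrow> b \<notin> T')"

end

theory Submission
  imports Defs
begin

lemma walk_alt: "walk V E ws \<longleftrightarrow> ws \<noteq> [] \<and> set ws \<subseteq> V \<and> successively (\<lambda>x y. (x,y)\<in>E) ws"
  unfolding walk_def successively_conv_nth by blast

lemma walk_app_iff:
  "xs \<noteq> [] \<Longrightarrow> ys \<noteq> [] \<Longrightarrow> walk V E (xs @ ys) \<longleftrightarrow> walk V E xs \<and> walk V E ys \<and> (last xs, hd ys) \<in> E"
  unfolding walk_alt successively_append_iff by auto

lemma wft_join:
  assumes "walk_from_to V E a b P" "walk_from_to V E b c Q"
  shows "walk_from_to V E a c (P @ tl Q)"
proof (cases "tl Q = []")
  case True
  then have "Q = [b]" using assms(2) unfolding walk_from_to_def walk_def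
    by (metis list.collapse)
  then show ?thesis using assms True unfolding walk_from_to_def by simp
next
  case False
  have Q: "Q = b # tl Q" using assms(2) unfolding walk_from_to_def walk_def by (metis list.collapse)
  have "walk V E (b # tl Q)" using assms(2) Q unfolding walk_from_to_def by metis
  then have "walk V E (tl Q)" "(b, hd (tl Q)) \<in> E"
    using walk_app_iff[of "[b]" "tl Q" V E] False by auto
  moreover have "P \<noteq> []" "last P = b" "hd P = a" using assms(1) unfolding walk_from_to_def walk_def by auto
  ultimately have "walk V E (P @ tl Q)" using walk_app_iff[of P "tl Q" V E] False assms(1)
    unfolding walk_from_to_def by auto
  moreover have "last (tl Q) = c" using assms(2) False Q unfolding walk_from_to_def
    by (metis last_ConsR)
  ultimately show ?thesis using False \<open>P \<noteq> []\<close> \<open>hd P = a\<close> unfolding walk_from_to_def by simp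
qed

lemma wft_prefix:
  assumes "walk_from_to V E a c W" "\<exists>x\<in>set W. Q x"
  shows "\<exists>ys y. walk_from_to V E a y (ys @ [y]) \<and> Q y \<and> (\<forall>z\<in>set ys. \<not> Q z) \<and> set (ys@[y]) \<subseteq> set W"
proof -
  obtain ys y zs where W: "W = ys @ y # zs" "Q y" "\<forall>z\<in>set ys. \<not> Q z"
    using split_list_first_prop[OF assms(2)] by blast
  have "walk V E (ys @ [y])"
  proof (cases "zs = []")
    case True
    have "W = ys @ [y]" using W(1) True by simp
    moreover have "walk V E W" using assms(1) unfolding walk_from_to_def by blast
    ultimately show ?thesis by simp
  next
    case False
    then show ?thesis using assms W walk_app_iff[of "ys@[y]" zs V E] unfolding walk_from_to_def by simp
  qed
  moreover have "hd (ys @ [y]) = a" using assms W unfolding walk_from_to_def by (cases ys) auto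
  ultimately have "walk_from_to V E a y (ys @ [y])" unfolding walk_from_to_def by simp
  moreover have "set (ys @ [y]) \<subseteq> set W" using W(1) by auto
  ultimately show ?thesis using W(2,3) by blast
qed

lemma wft_suffix:
  assumes "walk_from_to V E a c W" "\<exists>x\<in>set W. Q x"
  shows "\<exists>y zs. walk_from_to V E y c (y # zs) \<and> Q y \<and> (\<forall>z\<in>set zs. \<not> Q z) \<and> set (y#zs) \<subseteq> set W"
proof -
  obtain ys y zs where W: "W = ys @ y # zs" "Q y" "\<forall>z\<in>set zs. \<not> Q z"
    using split_list_last_prop[OF assms(2)] by blast
  have "walk V E (y # zs)"
  proof (cases "ys = []")
    case True
    have "W = y # zs" using W(1) True by simp
    moreover have "walk V E W" using assms(1) unfolding walk_from_to_def by blast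
    ultimately show ?thesis by simp
  next
    case False
    then show ?thesis using assms W walk_app_iff[of ys "y#zs" V E] unfolding walk_from_to_def by simp
  qed
  moreover have "last (y # zs) = c" using assms W unfolding walk_from_to_def by simp
  ultimately have "walk_from_to V E y c (y # zs)" unfolding walk_from_to_def by simp
  moreover have "set (y # zs) \<subseteq> set W" using W(1) by auto
  ultimately show ?thesis using W(2,3) by blast
qed


lemma wft_from_mid:
  assumes "walk_from_to V E a c (ys @ w # zs)"
  shows "walk_from_to V E w c (w # zs)"
proof -
  have "walk V E (w # zs)"
  proof (cases "ys = []")
    case True
    have "walk V E (ys @ w # zs)" using assms unfolding walk_from_to_def by blast
    then show ?thesis using True by simp
  next
    case False
    then show ?thesis using assms walk_app_iff[of ys "w#zs" V E] unfolding walk_from_to_def by simp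
  qed
  moreover have "last (w # zs) = c" using assms unfolding walk_from_to_def by simp
  ultimately show ?thesis unfolding walk_from_to_def by simp
qed

lemma wft_to_mid:
  assumes "walk_from_to V E a c (ys @ w # zs)"
  shows "walk_from_to V E a w (ys @ [w])"
proof -
  have "walk V E (ys @ [w])"
  proof (cases "zs = []")
    case True
    have "walk V E (ys @ w # zs)" using assms unfolding walk_from_to_def by blast
    then show ?thesis using True by simp
  next
    case False
    then show ?thesis using assms walk_app_iff[of "ys @ [w]" "zs" V E] unfolding walk_from_to_def by simp
  qed
  moreover have "hd (ys @ [w]) = a" using assms unfolding walk_from_to_def by (cases ys) auto
  ultimately show ?thesis unfolding walk_from_to_def by simp
qed

lemma wft_hd: "walk_from_to V E a c W \<Longrightarrow> a \<in> set W"
  unfolding walk_from_to_def walk_def by auto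

lemma wft_V: "walk_from_to V E a c W \<Longrightarrow> set W \<subseteq> V"
  unfolding walk_from_to_def walk_def by auto

lemma mvs_good_walk:
  assumes "mvs V E s t T" "x \<in> T"
  shows "\<exists>W. walk_from_to V E s t W \<and> x \<in> set W \<and> set W \<inter> (T - {x}) = {}"
proof -
  have "T - {x} \<subset> T" using assms(2) by blast
  then have "\<not> vertex_separator V E s t (T - {x})" using assms(1) unfolding mvs_def by blast
  moreover have "T - {x} \<subseteq> V" using assms(1) unfolding mvs_def vertex_separator_def by blast
  ultimately obtain W where W: "walk_from_to V E s t W" "set W \<inter> (T - {x}) = {}"
    unfolding vertex_separator_def by blast
  then have "set W \<inter> T \<noteq> {}" using assms(1) unfolding mvs_def vertex_separator_def by blast
  then have "x \<in> set W" using W(2) by blast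
  then show ?thesis using W by blast
qed

lemma mvs_suffix:
  assumes "mvs V E s t T" "x \<in> T"
  shows "\<exists>zs. walk_from_to V E x t (x # zs) \<and> set zs \<inter> T = {}"
proof -
  obtain W where W: "walk_from_to V E s t W" "x \<in> set W" "set W \<inter> (T - {x}) = {}"
    using mvs_good_walk[OF assms] by blast
  obtain ys zs where "W = ys @ x # zs" "x \<notin> set zs"
    using split_list_last_prop[of W "\<lambda>v. v = x"] W(2) by blast
  then show ?thesis using wft_from_mid[of V E s t ys x zs] W by auto
qed

lemma s_notin:
  assumes "st_graph V E s t" "mvs V E s t T" "T \<noteq> {s}"
  shows "s \<notin> T"
proof
  assume sT: "s \<in> T"
  have "vertex_separator V E s t {s}"
    using assms(1) wft_hd unfolding vertex_separator_def st_graph_def by fastforce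
  moreover have "{s} \<subset> T" using sT assms(3) by blast
  ultimately show False using assms(2) unfolding mvs_def by blast
qed

lemma below_prec:
  assumes "mvs V E s t T" "vertex_separator V E s t T'" "below V E t T' T" "x \<in> T"
  shows "precedes V E s T' x"
  unfolding precedes_def
proof (intro allI impI)
  fix P assume P: "walk_from_to V E s x P"
  obtain zs where zs: "walk_from_to V E x t (x # zs)" "set zs \<inter> T = {}"
    using mvs_suffix[OF assms(1,4)] by blast
  have "walk_from_to V E s t (P @ zs)" using wft_join[OF P zs(1)] by simp
  then have ne: "set (P @ zs) \<inter> T' \<noteq> {}" using assms(2) unfolding vertex_separator_def by blast
  show "set P \<inter> T' \<noteq> {}"
  proof
    assume "set P \<inter> T' = {}"
    then obtain w where w: "w \<in> set zs" "w \<in> T'" using ne by auto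
    then obtain a c where "zs = a @ w # c" by (meson split_list)
    then have wc: "walk_from_to V E w t (w # c)" "set (w # c) \<subseteq> set zs"
      using wft_from_mid[of V E x t "x # a" w c] zs(1) by auto
    have "below_v V E t w T" using assms(3) w(2) unfolding below_def by blast
    then show False using wc zs(2) unfolding below_v_def by blast
  qed
qed

lemma exists_mvs_sub:
  assumes "finite V" "vertex_separator V E s t X"
  shows "\<exists>T'. T' \<subseteq> X \<and> mvs V E s t T'"
proof -
  define A where "A = {Y. Y \<subseteq> X \<and> vertex_separator V E s t Y}"
  have "X \<subseteq> V" using assms(2) unfolding vertex_separator_def by blast
  then have "finite X" using assms(1) finite_subset by blast
  then have "finite A" unfolding A_def by simp
  moreover have "X \<in> A" using assms(2) unfolding A_def by blast
  ultimately obtain m where m: "m \<in> A" "\<forall>b\<in>A. b \<subseteq> m \<longrightarrow> m = b"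
    using finite_has_minimal[of A] by blast
  have "mvs V E s t m"
    unfolding mvs_def
  proof (intro conjI allI impI)
    show "vertex_separator V E s t m" using m(1) unfolding A_def by blast
  next
    fix T' assume "T' \<subset> m"
    then show "\<not> vertex_separator V E s t T'" using m unfolding A_def by blast
  qed
  then show ?thesis using m(1) unfolding A_def by blast
qed


lemma dir1:
  assumes G: "st_graph V E s t" and M: "mvs V E s t T" and sT: "s \<notin> T"
    and bm: "b_minimal V E s t b T" and uT: "u \<in> T"
  shows "precedes V E s ((T \<union> pred V E u) - {b}) b"
  unfolding precedes_def
proof (intro allI impI)
  fix S assume S: "walk_from_to V E s b S"
  have bT: "b \<in> T" using bm unfolding b_minimal_def by blast
  have TV: "T \<subseteq> V" using M unfolding mvs_def vertex_separator_def by blast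
  have sepT: "vertex_separator V E s t T" using M unfolding mvs_def by blast
  show "set S \<inter> (T \<union> pred V E u - {b}) \<noteq> {}"
  proof
    assume avoid: "set S \<inter> (T \<union> pred V E u - {b}) = {}"
    show False
    proof (cases "u = b")
      case True
      have Sne: "S \<noteq> []" using S unfolding walk_from_to_def walk_def by blast
      then have "S = butlast S @ [b]" using S unfolding walk_from_to_def
        by (metis append_butlast_last_id)
      then obtain xs where xs: "S = xs @ [b]" by blast
      have "xs \<noteq> []"
      proof
        assume "xs = []"
        then have "S = [b]" using xs by simp
        then have "s = b" using S unfolding walk_from_to_def by simp
        then show False using sT bT by simp
      qed
      have "walk V E S" using S unfolding walk_from_to_def by blast
      then have "walk V E (xs @ [b])" using xs by simp
      then have "walk V E xs" "(last xs, b) \<in> E"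
        using walk_app_iff[of xs "[b]" V E] \<open>xs \<noteq> []\<close> by auto
      then have "last xs \<in> V" using \<open>xs \<noteq> []\<close> unfolding walk_def by auto
      then have "last xs \<in> pred V E b" using \<open>(last xs, b) \<in> E\<close> unfolding pred_def by blast
      moreover have "last xs \<noteq> b" using \<open>(last xs, b) \<in> E\<close> G unfolding st_graph_def by blast
      moreover have "last xs \<in> set S" using xs \<open>xs \<noteq> []\<close> by simp
      ultimately show False using avoid True by blast
    next
      case False
      define A where "A = {v. \<exists>P. walk_from_to V E s v P \<and> set P \<inter> T = {}}"
      define X where "X = (T - {u}) \<union> (pred V E u \<inter> A)"
      have XV: "X \<subseteq> V" using TV unfolding X_def pred_def by blast
      have sepX: "vertex_separator V E s t X"
        unfolding vertex_separator_def
      proof (intro conjI allI impI XV)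
        fix W assume W: "walk_from_to V E s t W"
        then have "\<exists>x\<in>set W. x \<in> T" using sepT unfolding vertex_separator_def by blast
        then obtain ys y where Y: "walk_from_to V E s y (ys @ [y])" "y \<in> T"
          "\<forall>z\<in>set ys. z \<notin> T" "set (ys @ [y]) \<subseteq> set W"
          using wft_prefix[OF W, of "\<lambda>v. v \<in> T"] by blast
        show "set W \<inter> X \<noteq> {}"
        proof (cases "y = u")
          case False
          then show ?thesis using Y unfolding X_def by auto
        next
          case True
          have wY: "walk V E (ys @ [y])" "hd (ys @ [y]) = s"
            using Y(1) unfolding walk_from_to_def by blast+
          have "ys \<noteq> []"
          proof
            assume "ys = []"
            then have "y = s" using wY(2) by simp
            then show False using Y(2) sT by blast
          qed
          then have wy: "walk V E ys" "(last ys, u) \<in> E"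
            using walk_app_iff[of ys "[y]" V E] wY(1) True by auto
          have "hd ys = s" using wY(2) \<open>ys \<noteq> []\<close> by simp
          then have "walk_from_to V E s (last ys) ys" using wy unfolding walk_from_to_def by simp
          then have "last ys \<in> A" using Y(3) unfolding A_def by blast
          moreover have "last ys \<in> V" using wy \<open>ys \<noteq> []\<close> unfolding walk_def by auto
          ultimately have "last ys \<in> X" using wy unfolding X_def pred_def by blast
          moreover have "last ys \<in> set W" using Y(4) \<open>ys \<noteq> []\<close> by auto
          ultimately show ?thesis by blast
        qed
      qed
      have belowX: "below V E t X T"
        unfolding below_def
      proof
        fix x assume x: "x \<in> X"
        show "below_v V E t x T"
          unfolding below_v_def
        proof (intro allI impI)
          fix Q assume Q: "walk_from_to V E x t Q"
          show "set Q \<inter> T \<noteq> {}"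
          proof (cases "x \<in> T")
            case True then show ?thesis using wft_hd[OF Q] by blast
          next
            case False
            then have "x \<in> A" using x unfolding X_def by blast
            then obtain P where P: "walk_from_to V E s x P" "set P \<inter> T = {}" unfolding A_def by blast
            have "walk_from_to V E s t (P @ tl Q)" using wft_join[OF P(1) Q] .
            then have "set (P @ tl Q) \<inter> T \<noteq> {}" using sepT unfolding vertex_separator_def by blast
            then have "set (tl Q) \<inter> T \<noteq> {}" using P(2) by auto
            then obtain q where q: "q \<in> set (tl Q)" "q \<in> T" by blast
            then have "q \<in> set Q" by (cases Q) auto
            then show ?thesis using q(2) by blast
          qed
        qed
      qed
      have "finite V" using G unfolding st_graph_def by blast
      then obtain T' where T': "T' \<subseteq> X" "mvs V E s t T'"
        using exists_mvs_sub[OF _ sepX] by blast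
      have sepT': "vertex_separator V E s t T'" using T'(2) unfolding mvs_def by blast
      have "(u, u) \<notin> E" using G unfolding st_graph_def by blast
      then have "u \<notin> X" unfolding X_def pred_def by blast
      then have "T' \<noteq> T" using uT T'(1) by blast
      moreover have "below V E t T' T" using belowX T'(1) unfolding below_def by blast
      ultimately have sb: "strictly_below V E t T' T" unfolding strictly_below_def by blast
      have "b \<in> T'"
      proof (rule ccontr)
        assume nb: "b \<notin> T'"
        obtain zs where zs: "walk_from_to V E b t (b # zs)" "set zs \<inter> T = {}"
          using mvs_suffix[OF M bT] by blast
        have "walk_from_to V E s t (S @ zs)" using wft_join[OF S zs(1)] by simp
        then obtain w where w: "w \<in> set (S @ zs)" "w \<in> T'"
          using sepT' unfolding vertex_separator_def by blast
        have wX: "w \<in> X" "w \<noteq> b" using w(2) T'(1) nb by auto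
        show False
        proof (cases "w \<in> set S")
          case True
          then show False using wX avoid unfolding X_def by blast
        next
          case False
          then have wz: "w \<in> set zs" using w(1) by simp
          then have "w \<notin> T" using zs(2) by blast
          then have "w \<in> A" using wX unfolding X_def by blast
          then obtain P where P: "walk_from_to V E s w P" "set P \<inter> T = {}" unfolding A_def by blast
          obtain a c where "zs = a @ w # c" using wz by (meson split_list)
          then have wc: "walk_from_to V E w t (w # c)" "set c \<subseteq> set zs"
            using wft_from_mid[of V E b t "b # a" w c] zs(1) by auto
          have "walk_from_to V E s t (P @ c)" using wft_join[OF P(1) wc(1)] by simp
          then have "set (P @ c) \<inter> T \<noteq> {}" using sepT unfolding vertex_separator_def by blast
          then show False using P(2) wc(2) zs(2) by auto
        qed
      qed
      then show False using bm T'(2) sb unfolding b_minimal_def by blast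
    qed
  qed
qed

lemma dir2:
  assumes G: "st_graph V E s t" and M: "mvs V E s t T" and bT: "b \<in> T"
    and C: "\<forall>u\<in>T. precedes V E s ((T \<union> pred V E u) - {b}) b"
  shows "b_minimal V E s t b T"
  unfolding b_minimal_def
proof (intro conjI allI impI M bT)
  fix T' assume A: "mvs V E s t T' \<and> strictly_below V E t T' T"
  have M': "mvs V E s t T'" and bl: "below V E t T' T" and ne: "T' \<noteq> T"
    using A unfolding strictly_below_def by auto
  have sepT': "vertex_separator V E s t T'" using M' unfolding mvs_def by blast
  have sepT: "vertex_separator V E s t T" using M unfolding mvs_def by blast
  show "b \<notin> T'"
  proof
    assume bT': "b \<in> T'"
    obtain u where u: "u \<in> T" "u \<notin> T'"
    proof -
      have "\<not> T \<subset> T'" using M' sepT unfolding mvs_def by blast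
      then have "\<not> T \<subseteq> T'" using ne by blast
      then show ?thesis using that by blast
    qed
    obtain W where W: "walk_from_to V E s t W" "b \<in> set W" "set W \<inter> (T' - {b}) = {}"
      using mvs_good_walk[OF M' bT'] by blast
    obtain ys y where Y: "walk_from_to V E s y (ys @ [y])" "y = b"
      "\<forall>z\<in>set ys. z \<noteq> b" "set (ys @ [y]) \<subseteq> set W"
      using wft_prefix[OF W(1), of "\<lambda>v. v = b"] W(2) by blast
    have ysT': "set ys \<inter> T' = {}" using Y(3,4) W(3) by auto
    have "set (ys @ [b]) \<inter> ((T \<union> pred V E u) - {b}) \<noteq> {}"
      using C u(1) Y(1,2) unfolding precedes_def by blast
    then obtain y' where y': "y' \<in> set ys" "y' \<in> T \<union> pred V E u" by auto
    obtain a c where ac: "ys = a @ y' # c" using y'(1) by (meson split_list)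
    have Pa: "walk_from_to V E s y' (a @ [y'])"
      using wft_to_mid[of V E s b a y' "c @ [b]"] Y(1,2) ac by simp
    have aT': "set (a @ [y']) \<inter> T' = {}" using ysT' ac by auto
    show False
    proof (cases "y' \<in> T")
      case True
      then have "precedes V E s T' y'" using below_prec[OF M sepT' bl] by blast
      then show False using Pa aT' unfolding precedes_def by blast
    next
      case False
      then have yu: "y' \<in> V" "(y', u) \<in> E" using y' unfolding pred_def by auto
      have "u \<in> V" using u(1) M unfolding mvs_def vertex_separator_def by blast
      then have "walk V E [y', u]" using yu unfolding walk_def
        by (auto simp: less_Suc_eq nth_Cons split: nat.splits)
      then have "walk_from_to V E y' u [y', u]" unfolding walk_from_to_def by simp
      from wft_join[OF Pa this] have "walk_from_to V E s u (a @ [y', u])" by simp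
      moreover have "set (a @ [y', u]) \<inter> T' = {}" using aT' u(2) by auto
      moreover have "precedes V E s T' u" using below_prec[OF M sepT' bl u(1)] .
      ultimately show False unfolding precedes_def by blast
    qed
  qed
qed

theorem theorem4:
  assumes "st_graph V E s t"
    and "mvs V E s t T"
    and "T \<noteq> {s}"
    and "b \<in> T"
  shows "b_minimal V E s t b T \<longleftrightarrow>
           (\<forall>u\<in>T. precedes V E s ((T \<union> pred V E u) - {b}) b)"
  using dir1[OF assms(1,2) s_notin[OF assms(1-3)]] dir2[OF assms(1,2,4)] by blast

end
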